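(* Let $n\ge1$, let $0<x_1<x_2<\dots<x_{n+1}<1$, and let $A$ be the $(n+1)\times(n+1)$ Bernstein–Vandermonde matrix, $a_{r,c}=\binom{n}{c-1}x_r^{\,c-1}(1-x_r)^{n-c+1}$. Then the diagonal pivots of the Neville elimination of $A$ are, for $i=1,\dots,n+1$, $$p_{i,i}=\frac{\binom{n}{i-1}(1-x_i)^{n-i+1}\prod_{k=1}^{i-1}(x_i-x_k)}{\prod_{k=1}^{i-1}(1-x_k)}$$ (empty products equal $1$).
   Context: Neville elimination of a nonsingular $N\times N$ matrix $M$: set $M_1=M$ and, for $t=1,\dots,N-1$, obtain $M_{t+1}=(a^{(t+1)}_{i,j})$ from $M_t=(a^{(t)}_{i,j})$ by $a^{(t+1)}_{i,j}=a^{(t)}_{i,j}$ if $i\le t$; $a^{(t+1)}_{i,j}=a^{(t)}_{i,j}-\big(a^{(t)}_{i,t}/a^{(t)}_{i-1,t}\big)a^{(t)}_{i-1,j}$ if $i\ge t+1$ and $j\ge t+1$; and $a^{(t+1)}_{i,j}=0$ otherwise. The pivot $(i,j)$ is $p_{i,j}=a^{(j)}_{i,j}$ for $1\le j\le i\le N$; the diagonal pivots are $p_{i,i}$. *)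

theory Defs
  imports Complex_Main
begin

text \<open>Matrices are functions nat => nat => real, with 1-based indices (rows i, columns j).
 The elimination step t (t >= 1) producing M_(t+1) from M_t.\<close>
definition neville_step :: "nat \<Rightarrow> (nat \<Rightarrow> nat \<Rightarrow> real) \<Rightarrow> (nat \<Rightarrow> nat \<Rightarrow> real)" where
  "neville_step t M = (\<lambda>i j.
     if i \<le> t then M i j
     else if j \<ge> t + 1 then M i j - (M i t / M (i - 1) t) * M (i - 1) j
     else 0)"

text \<open>neville_mat M t = M_t for t >= 1 (with M_1 = M; also M_0 = M by convention).\<close>
fun neville_mat :: "(nat \<Rightarrow> nat \<Rightarrow> real) \<Rightarrow> nat \<Rightarrow> (nat \<Rightarrow> nat \<Rightarrow> real)" where
  "neville_mat M 0 = M"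
| "neville_mat M (Suc t) = (if t = 0 then M else neville_step t (neville_mat M t))"

definition neville_pivot :: "(nat \<Rightarrow> nat \<Rightarrow> real) \<Rightarrow> nat \<Rightarrow> nat \<Rightarrow> real" where
  "neville_pivot M i j = neville_mat M j i j"

definition bernstein_vandermonde :: "nat \<Rightarrow> (nat \<Rightarrow> real) \<Rightarrow> nat \<Rightarrow> nat \<Rightarrow> real" where
  "bernstein_vandermonde n x = (\<lambda>r c. real (n choose (c - 1)) * x r ^ (c - 1) * (1 - x r) ^ (n + 1 - c))"

end

theory Submission
  imports Defs
begin

fun G :: "(nat \<Rightarrow> real) \<Rightarrow> nat \<Rightarrow> nat \<Rightarrow> nat \<Rightarrow> real" where
  "G y 0 lo k = 1"
| "G y (Suc m) lo 0 = 0"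
| "G y (Suc m) lo (Suc k) = G y (Suc m) lo k + y (lo + k) * G y m lo (Suc k)"

lemma gen_aux:
  fixes A B C D a b X :: real
  assumes h1: "A = B + b*D" and h2: "A = C + a*D"
  shows "X + a*B + b*A = (X + b*C) + a*A"
proof -
  have c: "C = B + b*D - a*D" using h1 h2 by simp
  show ?thesis unfolding c h1 by (simp add: algebra_simps)
qed

lemma G_front:
  "G y (Suc m) lo (Suc k) = G y (Suc m) (Suc lo) k + y lo * G y m lo (Suc k)"
proof (induction m arbitrary: lo k)
  case 0
  show ?case by (induction k) (auto simp: algebra_simps)
next
  case (Suc m)
  note outer = Suc.IH
  show ?case
  proof (induction k)
    case 0
    then show ?case by simp
  next
    case (Suc k)
    have e1: "G y (Suc m) lo (Suc (Suc k)) = G y (Suc m) (Suc lo) (Suc k) + y lo * G y m lo (Suc (Suc k))"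
      using outer[of lo "Suc k"] .
    have "G y (Suc (Suc m)) lo (Suc (Suc k)) = G y (Suc (Suc m)) lo (Suc k) + y (lo + Suc k) * G y (Suc m) lo (Suc (Suc k))"
      by simp
    also have "\<dots> = G y (Suc (Suc m)) (Suc lo) k + y lo * G y (Suc m) lo (Suc k) + y (lo + Suc k) * G y (Suc m) lo (Suc (Suc k))"
      using Suc.IH(1) by simp
    also have "\<dots> = G y (Suc (Suc m)) (Suc lo) (Suc k) + y lo * G y (Suc m) lo (Suc (Suc k))"
    proof -
      have d1: "G y (Suc (Suc m)) (Suc lo) (Suc k) = G y (Suc (Suc m)) (Suc lo) k + y (lo + Suc k) * G y (Suc m) (Suc lo) (Suc k)"
        by (simp del: G.simps(3) add: G.simps(3)[of y "Suc m" "Suc lo" k] add.commute)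
      have d2: "G y (Suc m) lo (Suc (Suc k)) = G y (Suc m) lo (Suc k) + y (lo + Suc k) * G y m lo (Suc (Suc k))"
        by (rule G.simps(3))
      show ?thesis unfolding d1 using gen_aux[OF d2 e1] by simp
    qed
    finally show ?case .
  qed
qed

lemma G_diff:
  "G y (Suc m) (Suc lo) (Suc k) - G y (Suc m) lo (Suc k) = (y (lo + Suc k) - y lo) * G y m lo (Suc (Suc k))"
  using G_front[of y m lo "Suc k"] by (simp add: algebra_simps)

lemma G_one: "G y m lo (Suc 0) = y lo ^ m"
  by (induction m) auto

lemma x_mono:
  fixes x :: "nat \<Rightarrow> real"
  assumes step: "\<And>k. 1 \<le> k \<Longrightarrow> k \<le> n \<Longrightarrow> x k < x (k + 1)"
  shows "1 \<le> k \<Longrightarrow> k < i \<Longrightarrow> i \<le> n + 1 \<Longrightarrow> x k < x i"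
proof (induction i)
  case 0 then show ?case by simp
next
  case (Suc i)
  show ?case
  proof (cases "k = i")
    case True then show ?thesis using step[of i] Suc.prems by simp
  next
    case False
    then have "x k < x i" using Suc by simp
    also have "x i < x (Suc i)" using step[of i] Suc.prems False by simp
    finally show ?thesis .
  qed
qed

lemma bv_pow:
  fixes z :: real and j n :: nat
  assumes "z < 1" "j \<le> n + 1" "1 \<le> j"
  shows "z ^ (j - 1) * (1 - z) ^ (n + 1 - j) = (1 - z) ^ n * (z / (1 - z)) ^ (j - 1)"
proof -
  have nz: "1 - z \<noteq> 0" using assms by simp
  have "(1 - z) ^ n = (1 - z) ^ (j - 1) * (1 - z) ^ (n + 1 - j)"
    using assms by (simp add: power_add[symmetric])
  then show ?thesis using nz by (simp add: power_divide)
qed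

lemma elim_aux:
  fixes a b c e P Q G1 G2 :: real
  assumes "D \<noteq> 0" "c \<noteq> 0" "Q \<noteq> 0"
  shows "a * b * P * G1 - (a * c * P / (D * c * Q)) * (D * b * Q * G2) = a * b * P * (G1 - G2)"
proof -
  have "a * c * P / (D * c * Q) = (a * P) / (D * Q)" using assms by simp
  moreover have "(a * P) / (D * Q) * (D * b * Q * G2) = a * b * P * G2"
    using assms by (simp add: field_simps)
  ultimately have "(a * c * P / (D * c * Q)) * (D * b * Q * G2) = a * b * P * G2" by simp
  then show ?thesis by (metis right_diff_distrib)
qed

lemma main_claim:
  fixes n :: nat and x :: "nat \<Rightarrow> real"
  assumes x1: "0 < x 1"
    and step: "\<And>k. 1 \<le> k \<Longrightarrow> k \<le> n \<Longrightarrow> x k < x (k + 1)"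
    and xn: "x (n + 1) < 1"
  defines "y \<equiv> (\<lambda>k. x k / (1 - x k))"
  shows "1 \<le> t \<Longrightarrow> t \<le> i \<Longrightarrow> i \<le> n + 1 \<Longrightarrow> t \<le> j \<Longrightarrow>
    neville_mat (bernstein_vandermonde n x) t i j =
      (1 - x i) ^ n * real (n choose (j - 1)) * (\<Prod>k\<in>{i+1-t..<i}. (y i - y k)) * G y (j - t) (i - t + 1) t"
proof (induction t arbitrary: i j)
  case 0 then show ?case by simp
next
  case (Suc t)
  have xb: "0 < x k \<and> x k < 1" if "1 \<le> k" "k \<le> n + 1" for k
  proof
    have "x 1 \<le> x k" using x_mono[where n=n and x=x, OF step, of 1 k] that by (cases "k = 1") auto
    then show "0 < x k" using x1 by simp
    have "x k \<le> x (n+1)" using x_mono[where n=n and x=x, OF step, of k "n+1"] that by (cases "k = n+1") auto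
    then show "x k < 1" using xn by simp
  qed
  have ymono: "y k < y l" if "1 \<le> k" "k < l" "l \<le> n + 1" for k l
  proof -
    have a: "x k < x l" using x_mono[where n=n and x=x, OF step] that by simp
    have b: "0 < 1 - x k" "0 < 1 - x l" using xb[of k] xb[of l] that by auto
    have "x k * (1 - x l) < x l * (1 - x k)" using a by (simp add: algebra_simps)
    then show ?thesis unfolding y_def using b by (simp add: divide_simps)
  qed
  show ?case
  proof (cases "t = 0")
    case True
    then have "Suc t = 1" by simp
    show ?thesis
    proof (cases "j \<le> n + 1")
      case True
      have "x i < 1" using xb[of i] Suc.prems by simp
      then show ?thesis using \<open>t = 0\<close> True Suc.prems bv_pow[of "x i" j n]
        by (simp add: bernstein_vandermonde_def G_one y_def)
    next
      case False
      then show ?thesis using \<open>t = 0\<close> by (simp add: bernstein_vandermonde_def binomial_eq_0)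
    qed
  next
    case False
    let ?N = "neville_mat (bernstein_vandermonde n x) t"
    let ?d = "\<lambda>i. (1 - x i) ^ n" and ?c = "\<lambda>j. real (n choose (j - 1))"
    let ?P = "\<lambda>i. \<Prod>k\<in>{i+1-t..<i}. (y i - y k)"
    have t1: "1 \<le> t" using False by simp
    have i1: "i - 1 \<ge> t" "i > t" using Suc.prems by auto
    have e1: "?N i j = ?d i * ?c j * ?P i * G y (j - t) (i - t + 1) t"
      using Suc.IH[of i j] t1 Suc.prems by simp
    have e2: "?N i t = ?d i * ?c t * ?P i"
      using Suc.IH[of i t] t1 Suc.prems by simp
    have e3: "?N (i-1) t = ?d (i-1) * ?c t * ?P (i-1)"
      using Suc.IH[of "i-1" t] t1 Suc.prems i1 by simp
    have e4: "?N (i-1) j = ?d (i-1) * ?c j * ?P (i-1) * G y (j - t) (i - t) t"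
    proof -
      have "i - 1 - t + 1 = i - t" using i1 by simp
      then show ?thesis using Suc.IH[of "i-1" j] t1 Suc.prems i1 by simp
    qed
    have nz1: "?d (i-1) \<noteq> 0"
    proof -
      have "1 \<le> i - 1" "i - 1 \<le> n + 1" using i1 t1 Suc.prems by auto
      then have "x (i-1) < 1" using xb by blast
      then show ?thesis by simp
    qed
    have nz2: "?c t \<noteq> 0" using Suc.prems by simp
    have nz3: "?P (i-1) \<noteq> 0"
    proof -
      have "\<forall>k\<in>{i-1+1-t..<i-1}. y (i-1) - y k \<noteq> 0"
      proof
        fix k assume "k \<in> {i-1+1-t..<i-1}"
        then have "1 \<le> k" "k < i - 1" "i - 1 \<le> n + 1" using i1 t1 Suc.prems by auto
        then have "y k < y (i-1)" by (rule ymono)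
        then show "y (i-1) - y k \<noteq> 0" by simp
      qed
      then show ?thesis by simp
    qed
    have step_eq: "neville_mat (bernstein_vandermonde n x) (Suc t) i j
        = ?N i j - (?N i t / ?N (i-1) t) * ?N (i-1) j"
      using False Suc.prems by (simp add: neville_step_def)
    also have "\<dots> = ?d i * ?c j * ?P i * (G y (j - t) (i - t + 1) t - G y (j - t) (i - t) t)"
      unfolding e1 e2 e3 e4 using nz1 nz2 nz3 by (rule elim_aux)
    also have "G y (j - t) (i - t + 1) t - G y (j - t) (i - t) t
        = (y i - y (i - t)) * G y (j - Suc t) (i - t) (Suc t)"
    proof -
      obtain m where m: "j - t = Suc m" using Suc.prems by (metis Suc_diff_Suc Suc_le_lessD)
      obtain k where k: "t = Suc k" using False by (cases t) auto
      have "G y (Suc m) (Suc (i - t)) (Suc k) - G y (Suc m) (i - t) (Suc k) = (y (i - t + Suc k) - y (i - t)) * G y m (i - t) (Suc (Suc k))"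
        by (rule G_diff)
      moreover have "i - t + Suc k = i" using k i1 by simp
      moreover have "j - Suc t = m" using m by simp
      ultimately show ?thesis using m k by simp
    qed
    finally have calc: "neville_mat (bernstein_vandermonde n x) (Suc t) i j = ?d i * ?c j * ?P i * ((y i - y (i - t)) * G y (j - Suc t) (i - t) (Suc t))" .
    have pe: "(\<Prod>k\<in>{i+1-Suc t..<i}. (y i - y k)) = (y i - y (i - t)) * ?P i"
    proof -
      have "{i+1-Suc t..<i} = {i-t..<i}" by simp
      moreover have "i - t < i" using i1 t1 by simp
      ultimately have "(\<Prod>k\<in>{i+1-Suc t..<i}. (y i - y k)) = (y i - y (i - t)) * (\<Prod>k\<in>{Suc (i-t)..<i}. (y i - y k))"
        by (simp add: prod.atLeast_Suc_lessThan)
      moreover have "Suc (i - t) = i + 1 - t" using i1 by simp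
      ultimately show ?thesis by simp
    qed
    have ie: "i - Suc t + 1 = i - t" using i1 by simp
    show ?thesis unfolding calc pe ie by (simp only: mult_ac)
  qed
qed

theorem mainTheorem7:
  fixes n :: nat and x :: "nat \<Rightarrow> real"
  assumes "n \<ge> 1"
    and "0 < x 1"
    and "\<And>k. 1 \<le> k \<Longrightarrow> k \<le> n \<Longrightarrow> x k < x (k + 1)"
    and "x (n + 1) < 1"
  shows "\<forall>i\<in>{1..n+1}.
     neville_pivot (bernstein_vandermonde n x) i i =
       real (n choose (i - 1)) * (1 - x i) ^ (n + 1 - i) * (\<Prod>k=1..i-1. (x i - x k))
       / (\<Prod>k=1..i-1. (1 - x k))"
proof
  fix i assume i: "i \<in> {1..n+1}"
  define y where "y = (\<lambda>k. x k / (1 - x k))"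
  have xb: "0 < x k \<and> x k < 1" if "1 \<le> k" "k \<le> n + 1" for k
  proof
    have "x 1 \<le> x k" using x_mono[where n=n and x=x, OF assms(3), of 1 k] that by (cases "k = 1") auto
    then show "0 < x k" using assms(2) by simp
    have "x k \<le> x (n+1)" using x_mono[where n=n and x=x, OF assms(3), of k "n+1"] that by (cases "k = n+1") auto
    then show "x k < 1" using assms(4) by simp
  qed
  have piv: "neville_pivot (bernstein_vandermonde n x) i i =
      (1 - x i) ^ n * real (n choose (i - 1)) * (\<Prod>k\<in>{1..<i}. (y i - y k))"
    using main_claim[OF assms(2) assms(3) assms(4), of i i i] i
    unfolding neville_pivot_def y_def by simp
  have set_eq: "{1..i-1} = {1..<i}" using i by auto
  have yd: "y i - y k = (x i - x k) / ((1 - x i) * (1 - x k))" if "k \<in> {1..<i}" for k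
  proof -
    have "1 - x i \<noteq> 0" "1 - x k \<noteq> 0" using xb[of i] xb[of k] i that by auto
    then show ?thesis unfolding y_def by (simp add: field_simps)
  qed
  have "(\<Prod>k\<in>{1..<i}. (y i - y k)) = (\<Prod>k\<in>{1..<i}. (x i - x k)) / ((1 - x i) ^ (i - 1) * (\<Prod>k\<in>{1..<i}. (1 - x k)))"
  proof -
    have "(\<Prod>k\<in>{1..<i}. (y i - y k)) = (\<Prod>k\<in>{1..<i}. (x i - x k) / ((1 - x i) * (1 - x k)))"
      by (rule prod.cong[OF refl yd])
    also have "\<dots> = (\<Prod>k\<in>{1..<i}. (x i - x k)) / (\<Prod>k\<in>{1..<i}. ((1 - x i) * (1 - x k)))"
      by (rule prod_dividef)
    also have "(\<Prod>k\<in>{1..<i}. ((1 - x i) * (1 - x k))) = (1 - x i) ^ (i - 1) * (\<Prod>k\<in>{1..<i}. (1 - x k))"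
      by (simp add: prod.distrib)
    finally show ?thesis .
  qed
  moreover have "(1 - x i) ^ n = (1 - x i) ^ (i - 1) * (1 - x i) ^ (n + 1 - i)"
    using i by (simp add: power_add[symmetric])
  moreover have "x i \<noteq> 1" using xb[of i] i by auto
  ultimately show "neville_pivot (bernstein_vandermonde n x) i i =
       real (n choose (i - 1)) * (1 - x i) ^ (n + 1 - i) * (\<Prod>k=1..i-1. (x i - x k))
       / (\<Prod>k=1..i-1. (1 - x k))"
    unfolding piv set_eq by (simp add: field_simps)
qed

end
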